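(* Let $N\ge1$, $V=\{1,\dots,N\}$, $A$ an $N\times N$ row-stochastic matrix, and $\sigma_1,\sigma_2,\dots$ random variables with values in $2^V$. Consider $x(k+1)=A_{\sigma_k}x(k)$, $k\ge1$, with deterministic $x(1)\in\mathbb R^N$. Suppose: (a) $\mathcal G(A)$ is rooted. (b) There exists $\alpha\in(0,1)$ such that whenever $\mathbb P(\sigma_k\mid\sigma_{k-1},\dots,\sigma_1)\neq0$, it is $\ge\alpha$. (c) $\mathbb P(\sigma_k=\{j\}\mid\sigma_{k-1},\dots,\sigma_1)\neq0$ for all $j\in V$ and all $k\ge1$. Then the iteration reaches consensus almost surely.
   Context: $\mathcal G(A)$ is the directed graph on $V$ with an edge $(j,i)$ iff $a_{ij}>0$; it is rooted if some node $r$ has a directed path to every other node. For $\sigma\subseteq V$, $A_\sigma$ is the matrix whose $j$-th row equals the $j$-th row of $A$ if $j\in\sigma$ and $e_j^T$ otherwise. For $k=1$ conditional probabilities given the empty past are unconditional. The iteration reaches consensus almost surely if for every $\varepsilon>0$ and every $x(1)$, $\lim_{k\to\infty}\mathbb P\big(\sum_{j=1}^N (x_j(k)-\frac1N\sum_{i=1}^N x_i(k))^2\ge\varepsilon\big)=0$. *)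

theory Defs
  imports "HOL-Probability.Probability"
begin

text \<open>Node set V = {1..N}; matrices are functions nat => nat => real,
  vectors nat => real, only entries indexed by V matter.\<close>

definition row_stochastic :: "nat \<Rightarrow> (nat \<Rightarrow> nat \<Rightarrow> real) \<Rightarrow> bool" where
  "row_stochastic N A \<longleftrightarrow>
     (\<forall>i\<in>{1..N}. (\<forall>j\<in>{1..N}. A i j \<ge> 0) \<and> (\<Sum>j\<in>{1..N}. A i j) = 1)"

definition graph_edges :: "nat \<Rightarrow> (nat \<Rightarrow> nat \<Rightarrow> real) \<Rightarrow> (nat \<times> nat) set" where
  "graph_edges N A = {(j, i). i \<in> {1..N} \<and> j \<in> {1..N} \<and> A i j > 0}"

definition rooted_graph :: "nat \<Rightarrow> (nat \<Rightarrow> nat \<Rightarrow> real) \<Rightarrow> bool" where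
  "rooted_graph N A \<longleftrightarrow> (\<exists>r\<in>{1..N}. \<forall>i\<in>{1..N}. (r, i) \<in> (graph_edges N A)\<^sup>*)"

definition restr_matrix :: "(nat \<Rightarrow> nat \<Rightarrow> real) \<Rightarrow> nat set \<Rightarrow> nat \<Rightarrow> nat \<Rightarrow> real" where
  "restr_matrix A \<sigma> j l = (if j \<in> \<sigma> then A j l else (if j = l then 1 else 0))"

definition mat_vec :: "nat \<Rightarrow> (nat \<Rightarrow> nat \<Rightarrow> real) \<Rightarrow> (nat \<Rightarrow> real) \<Rightarrow> nat \<Rightarrow> real" where
  "mat_vec N B x i = (\<Sum>l\<in>{1..N}. B i l * x l)"

text \<open>cons_iter N A \<sigma> x1 \<omega> n = x(n+1): x(1) = x1, x(k+1) = A_{sigma_k} x(k).\<close>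
primrec cons_iter ::
  "nat \<Rightarrow> (nat \<Rightarrow> nat \<Rightarrow> real) \<Rightarrow> (nat \<Rightarrow> 'a \<Rightarrow> nat set) \<Rightarrow> (nat \<Rightarrow> real) \<Rightarrow> 'a \<Rightarrow> nat \<Rightarrow> nat \<Rightarrow> real"
where
  "cons_iter N A \<sigma> x1 \<omega> 0 = x1"
| "cons_iter N A \<sigma> x1 \<omega> (Suc n) = mat_vec N (restr_matrix A (\<sigma> (Suc n) \<omega>)) (cons_iter N A \<sigma> x1 \<omega> n)"

definition disagreement :: "nat \<Rightarrow> (nat \<Rightarrow> real) \<Rightarrow> real" where
  "disagreement N x = (\<Sum>j\<in>{1..N}. (x j - (1 / real N) * (\<Sum>i\<in>{1..N}. x i))\<^sup>2)"

text \<open>Probability of the history sigma_1 = s 1, ..., sigma_k = s k (k = 0: whole space).\<close>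
definition hist_prob :: "'a measure \<Rightarrow> (nat \<Rightarrow> 'a \<Rightarrow> nat set) \<Rightarrow> nat \<Rightarrow> (nat \<Rightarrow> nat set) \<Rightarrow> real" where
  "hist_prob M \<sigma> k s = measure M {\<omega> \<in> space M. \<forall>i\<in>{1..k}. \<sigma> i \<omega> = s i}"

text \<open>P(sigma_k = s k | sigma_{k-1} = s (k-1), ..., sigma_1 = s 1), meaningful when the
  conditioning history has positive probability.\<close>
definition cond_prob :: "'a measure \<Rightarrow> (nat \<Rightarrow> 'a \<Rightarrow> nat set) \<Rightarrow> nat \<Rightarrow> (nat \<Rightarrow> nat set) \<Rightarrow> real" where
  "cond_prob M \<sigma> k s = hist_prob M \<sigma> k s / hist_prob M \<sigma> (k - 1) s"

end

theory Submission
  imports Defs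
begin


definition cyl :: "'a measure \<Rightarrow> (nat \<Rightarrow> 'a \<Rightarrow> nat set) \<Rightarrow> nat \<Rightarrow> (nat \<Rightarrow> nat set) \<Rightarrow> 'a set"
  where "cyl M \<sigma> n h = {\<omega>\<in>space M. \<forall>i\<in>{1..n}. \<sigma> i \<omega> = h i}"
definition Ev :: "'a measure \<Rightarrow> (nat \<Rightarrow> 'a \<Rightarrow> nat set) \<Rightarrow> ((nat \<Rightarrow> nat set) \<Rightarrow> bool) \<Rightarrow> 'a set"
  where "Ev M \<sigma> Q = {\<omega>\<in>space M. Q (\<lambda>i. \<sigma> i \<omega>)}"
definition "dep (n::nat) (Q::(nat \<Rightarrow> nat set) \<Rightarrow> bool) \<longleftrightarrow> (\<forall>h h'. (\<forall>i\<in>{1..n}. h i = h' i) \<longrightarrow> Q h = Q h')"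
definition "HS (N::nat) (n::nat) = PiE {1..n} (\<lambda>_. Pow {1..N})"

context
  fixes M :: "'a measure" and N :: nat and \<sigma> :: "nat \<Rightarrow> 'a \<Rightarrow> nat set" and \<alpha> :: real
  assumes P: "prob_space M" and apos: "0 < \<alpha>"
    and meas: "\<And>k. k \<ge> 1 \<Longrightarrow> \<sigma> k \<in> M \<rightarrow>\<^sub>M count_space UNIV"
    and vals: "\<And>k \<omega>. k \<ge> 1 \<Longrightarrow> \<omega> \<in> space M \<Longrightarrow> \<sigma> k \<omega> \<subseteq> {1..N}"
    and b: "\<And>k s. k \<ge> 1 \<Longrightarrow> hist_prob M \<sigma> (k - 1) s > 0 \<Longrightarrow>
             cond_prob M \<sigma> k s \<noteq> 0 \<Longrightarrow> cond_prob M \<sigma> k s \<ge> \<alpha>"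
    and c: "\<And>k s j. k \<ge> 1 \<Longrightarrow> hist_prob M \<sigma> (k - 1) s > 0 \<Longrightarrow> j \<in> {1..N} \<Longrightarrow>
             cond_prob M \<sigma> k (s(k := {j})) \<noteq> 0"
begin

lemma finite_HS: "finite (HS N n)"
  unfolding HS_def by (intro finite_PiE) auto

lemma cyl_sets: "cyl M \<sigma> n h \<in> sets M"
proof (induction n)
  case 0
  then show ?case by (simp add: cyl_def)
next
  case (Suc n)
  have e: "cyl M \<sigma> (Suc n) h = cyl M \<sigma> n h \<inter> (\<sigma> (Suc n) -` {h (Suc n)} \<inter> space M)"
  proof -
    have "{1..Suc n} = insert (Suc n) {1..n}" by auto
    then show ?thesis unfolding cyl_def by auto
  qed
  have "\<sigma> (Suc n) -` {h (Suc n)} \<inter> space M \<in> sets M"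
    using measurable_sets[OF meas[of "Suc n"], of "{h (Suc n)}"] by simp
  then show ?case using Suc e by auto
qed

lemma cyl_disj: "disjoint_family_on (cyl M \<sigma> n) (HS N n)"
unfolding disjoint_family_on_def
proof (intro ballI impI)
  fix h h' assume h: "h \<in> HS N n" "h' \<in> HS N n" "h \<noteq> h'"
  then obtain i where i: "i \<in> {1..n}" "h i \<noteq> h' i"
    unfolding HS_def using PiE_ext by metis
  then show "cyl M \<sigma> n h \<inter> cyl M \<sigma> n h' = {}" unfolding cyl_def by auto
qed

lemma Ev_eq:
  assumes "dep n Q"
  shows "Ev M \<sigma> Q = (\<Union>h\<in>{h\<in>HS N n. Q h}. cyl M \<sigma> n h)"
proof
  show "Ev M \<sigma> Q \<subseteq> (\<Union>h\<in>{h\<in>HS N n. Q h}. cyl M \<sigma> n h)"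
  proof
    fix \<omega> assume w: "\<omega> \<in> Ev M \<sigma> Q"
    define h where "h = restrict (\<lambda>i. \<sigma> i \<omega>) {1..n}"
    have "h \<in> HS N n" unfolding h_def HS_def using vals w by (auto simp: Ev_def)
    moreover have "Q h" using assms w unfolding dep_def Ev_def h_def
      by (metis (mono_tags, lifting) mem_Collect_eq restrict_apply')
    moreover have "\<omega> \<in> cyl M \<sigma> n h" using w unfolding cyl_def Ev_def h_def by auto
    ultimately show "\<omega> \<in> (\<Union>h\<in>{h\<in>HS N n. Q h}. cyl M \<sigma> n h)" by blast
  qed
next
  show "(\<Union>h\<in>{h\<in>HS N n. Q h}. cyl M \<sigma> n h) \<subseteq> Ev M \<sigma> Q"
  proof
    fix \<omega> assume "\<omega> \<in> (\<Union>h\<in>{h\<in>HS N n. Q h}. cyl M \<sigma> n h)"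
    then obtain h where "Q h" "\<omega> \<in> cyl M \<sigma> n h" by auto
    then show "\<omega> \<in> Ev M \<sigma> Q" using assms unfolding dep_def Ev_def cyl_def
      by (metis (mono_tags, lifting) mem_Collect_eq)
  qed
qed

lemma Ev_sets:
  assumes d: "dep n Q" shows "Ev M \<sigma> Q \<in> sets M"
proof -
  have "(\<Union>h\<in>{h\<in>HS N n. Q h}. cyl M \<sigma> n h) \<in> sets M"
    by (rule sets.finite_UN) (use finite_HS[of n] cyl_sets in auto)
  then show ?thesis using Ev_eq[OF d] by simp
qed

lemma Ev_measure:
  assumes "dep n Q"
  shows "measure M (Ev M \<sigma> Q) = (\<Sum>h\<in>{h\<in>HS N n. Q h}. hist_prob M \<sigma> n h)"
proof -
  interpret prob_space M by (rule P)
  have "measure M (\<Union>h\<in>{h\<in>HS N n. Q h}. cyl M \<sigma> n h) = (\<Sum>h\<in>{h\<in>HS N n. Q h}. measure M (cyl M \<sigma> n h))"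
    by (rule finite_measure_finite_Union)
      (use finite_HS[of n] cyl_sets cyl_disj[of n] in \<open>auto intro: disjoint_family_on_mono\<close>)
  then show ?thesis using Ev_eq[OF assms] by (simp add: hist_prob_def cyl_def)
qed

lemma step_bound:
  assumes "j \<in> {1..N}"
  shows "hist_prob M \<sigma> (Suc m) (h(Suc m := {j})) \<ge> \<alpha> * hist_prob M \<sigma> m h"
proof (cases "hist_prob M \<sigma> m h > 0")
  case True
  let ?s = "h(Suc m := {j})"
  have eqh: "hist_prob M \<sigma> m ?s = hist_prob M \<sigma> m h"
    unfolding hist_prob_def by (rule arg_cong[where f="measure M"]) auto
  have "cond_prob M \<sigma> (Suc m) ?s \<noteq> 0" using c[of "Suc m" h j] True assms by simp
  then have "cond_prob M \<sigma> (Suc m) ?s \<ge> \<alpha>" using b[of "Suc m" ?s] True eqh by simp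
  then have "\<alpha> \<le> hist_prob M \<sigma> (Suc m) ?s / hist_prob M \<sigma> m h"
    unfolding cond_prob_def using eqh by simp
  then show ?thesis using True by (simp add: pos_le_divide_eq mult.commute)
next
  case False
  moreover have "hist_prob M \<sigma> m h \<ge> 0" unfolding hist_prob_def by simp
  ultimately have "hist_prob M \<sigma> m h = 0" by linarith
  then show ?thesis unfolding hist_prob_def by simp
qed

lemma one_step:
  assumes dQ: "dep m Q" and j: "j \<in> {1..N}"
  shows "measure M (Ev M \<sigma> (\<lambda>h. Q h \<and> h (Suc m) = {j})) \<ge> \<alpha> * measure M (Ev M \<sigma> Q)"
proof -
  interpret prob_space M by (rule P)
  let ?F = "\<lambda>h. cyl M \<sigma> (Suc m) (h(Suc m := {j}))"
  let ?I = "{h\<in>HS N m. Q h}"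
  have e1: "Ev M \<sigma> (\<lambda>h. Q h \<and> h (Suc m) = {j}) = Ev M \<sigma> Q \<inter> {\<omega>\<in>space M. \<sigma> (Suc m) \<omega> = {j}}"
    unfolding Ev_def by auto
  have e2: "cyl M \<sigma> m h \<inter> {\<omega>\<in>space M. \<sigma> (Suc m) \<omega> = {j}} = ?F h" for h
  proof -
    have "{1..Suc m} = insert (Suc m) {1..m}" by auto
    then show ?thesis unfolding cyl_def by auto
  qed
  have eq: "Ev M \<sigma> (\<lambda>h. Q h \<and> h (Suc m) = {j}) = (\<Union>h\<in>?I. ?F h)"
    unfolding e1 Ev_eq[OF dQ] using e2 by blast
  have disj: "disjoint_family_on ?F ?I"
  proof (rule disjoint_family_on_bisimulation[OF disjoint_family_on_mono[OF _ cyl_disj[of m]]])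
    show "?I \<subseteq> HS N m" by auto
    fix n k assume "cyl M \<sigma> m n \<inter> cyl M \<sigma> m k = {}"
    then show "?F n \<inter> ?F k = {}" using e2[of n] e2[of k] by blast
  qed
  have "measure M (\<Union>h\<in>?I. ?F h) = (\<Sum>h\<in>?I. measure M (?F h))"
    by (rule finite_measure_finite_Union) (use finite_HS[of m] cyl_sets disj in auto)
  also have "\<dots> = (\<Sum>h\<in>?I. hist_prob M \<sigma> (Suc m) (h(Suc m := {j})))"
    by (simp add: hist_prob_def cyl_def)
  also have "\<dots> \<ge> (\<Sum>h\<in>?I. \<alpha> * hist_prob M \<sigma> m h)"
    by (rule sum_mono) (rule step_bound[OF j])
  finally have "measure M (\<Union>h\<in>?I. ?F h) \<ge> \<alpha> * (\<Sum>h\<in>?I. hist_prob M \<sigma> m h)"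
    by (simp add: sum_distrib_left)
  then show ?thesis using eq Ev_measure[OF dQ] by simp
qed

lemma dep_mono: "dep n Q \<Longrightarrow> n \<le> m \<Longrightarrow> dep m Q"
  unfolding dep_def by auto

lemma block:
  assumes dQ: "dep n Q" and js: "set js \<subseteq> {1..N}"
  shows "measure M (Ev M \<sigma> (\<lambda>h. Q h \<and> (\<forall>t<length js. h (Suc (n + t)) = {js!t})))
          \<ge> \<alpha> ^ length js * measure M (Ev M \<sigma> Q)"
  using js
proof (induction js rule: rev_induct)
  case Nil
  then show ?case by simp
next
  case (snoc j js)
  let ?Q' = "\<lambda>h. Q h \<and> (\<forall>t<length js. h (Suc (n + t)) = {js!t})"
  have d': "dep (n + length js) ?Q'"
    unfolding dep_def
  proof (intro allI impI)
    fix h h' :: "nat \<Rightarrow> nat set"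
    assume ag: "\<forall>i\<in>{1..n + length js}. h i = h' i"
    then have "Q h = Q h'" using dQ unfolding dep_def by auto
    moreover have "h (Suc (n + t)) = h' (Suc (n + t))" if "t < length js" for t
      using ag that by auto
    ultimately show "?Q' h = ?Q' h'" by auto
  qed
  have fe: "(\<lambda>h. Q h \<and> (\<forall>t<length (js @ [j]). h (Suc (n + t)) = {(js @ [j])!t}))
      = (\<lambda>h. ?Q' h \<and> h (Suc (n + length js)) = {j})"
  proof (rule ext)
    fix h :: "nat \<Rightarrow> nat set"
    have "(\<forall>t<length (js @ [j]). h (Suc (n + t)) = {(js @ [j])!t})
      = (h (Suc (n + length js)) = {j} \<and> (\<forall>t<length js. h (Suc (n + t)) = {(js @ [j])!t}))"
      by (simp only: length_append_singleton All_less_Suc nth_append_length)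
    also have "(\<forall>t<length js. h (Suc (n + t)) = {(js @ [j])!t}) = (\<forall>t<length js. h (Suc (n + t)) = {js!t})"
      by (simp add: nth_append)
    finally show "(Q h \<and> (\<forall>t<length (js @ [j]). h (Suc (n + t)) = {(js @ [j])!t}))
      = (?Q' h \<and> h (Suc (n + length js)) = {j})" by blast
  qed
  have IH: "measure M (Ev M \<sigma> ?Q') \<ge> \<alpha> ^ length js * measure M (Ev M \<sigma> Q)"
    using snoc.IH snoc.prems by simp
  have "measure M (Ev M \<sigma> (\<lambda>h. ?Q' h \<and> h (Suc (n + length js)) = {j})) \<ge> \<alpha> * measure M (Ev M \<sigma> ?Q')"
    using one_step[OF d', of j] snoc.prems by auto
  moreover have "\<alpha> * measure M (Ev M \<sigma> ?Q') \<ge> \<alpha> * (\<alpha> ^ length js * measure M (Ev M \<sigma> Q))"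
    using IH apos by (simp add: mult_left_mono)
  moreover have eqa: "\<alpha> ^ length (js @ [j]) * measure M (Ev M \<sigma> Q) = \<alpha> * (\<alpha> ^ length js * measure M (Ev M \<sigma> Q))"
    by simp
  ultimately show ?case unfolding fe eqa by linarith
qed

end



definition "upd N A x s = mat_vec N (restr_matrix A s) x"
definition "spn N (x::nat\<Rightarrow>real) = Max (x ` {1..N}) - Min (x ` {1..N})"
definition "XX N A h x1 n = cons_iter N A (\<lambda>k (_::unit). h k) x1 () n"

lemma cons_XX: "cons_iter N A \<sigma> x1 \<omega> n = XX N A (\<lambda>k. \<sigma> k \<omega>) x1 n"
  unfolding XX_def by (induction n) auto

lemma XX_Suc: "XX N A h x1 (Suc n) = upd N A (XX N A h x1 n) (h (Suc n))"
  unfolding XX_def upd_def by simp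

lemma XX_0: "XX N A h x1 0 = x1"
  unfolding XX_def by simp

lemma XX_dep: "(\<forall>i\<in>{1..n}. h i = h' i) \<Longrightarrow> XX N A h x1 n = XX N A h' x1 n"
proof (induction n)
  case 0
  then show ?case by (simp add: XX_0)
next
  case (Suc n)
  then have "XX N A h x1 n = XX N A h' x1 n" by auto
  moreover have "h (Suc n) = h' (Suc n)" using Suc.prems by auto
  ultimately show ?case by (simp add: XX_Suc)
qed

lemma upd_other:
  assumes "i \<notin> s" "i \<in> {1..N}"
  shows "upd N A x s i = x i"
proof -
  have "upd N A x s i = (\<Sum>l\<in>{1..N}. if i = l then x l else 0)"
    unfolding upd_def mat_vec_def restr_matrix_def using assms(1)
    by (intro sum.cong) auto
  also have "\<dots> = x i" using assms(2) by (simp add: sum.delta)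
  finally show ?thesis .
qed

lemma upd_in:
  assumes "i \<in> s"
  shows "upd N A x s i = (\<Sum>l\<in>{1..N}. A i l * x l)"
  unfolding upd_def mat_vec_def restr_matrix_def using assms by simp

lemma conv_lower:
  assumes rs: "row_stochastic N A" and i: "i \<in> {1..N}" and lo: "\<forall>l\<in>{1..N}. lo \<le> x l"
  shows "lo \<le> (\<Sum>l\<in>{1..N}. A i l * x l)"
proof -
  have s1: "(\<Sum>l\<in>{1..N}. A i l) = 1" and nn: "\<forall>l\<in>{1..N}. A i l \<ge> 0"
    using rs i unfolding row_stochastic_def by auto
  have "lo = (\<Sum>l\<in>{1..N}. A i l * lo)" using s1 by (simp add: sum_distrib_right[symmetric])
  also have "\<dots> \<le> (\<Sum>l\<in>{1..N}. A i l * x l)"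
    by (rule sum_mono) (use nn lo in \<open>auto intro: mult_left_mono\<close>)
  finally show ?thesis .
qed

lemma conv_upper:
  assumes rs: "row_stochastic N A" and i: "i \<in> {1..N}" and hi: "\<forall>l\<in>{1..N}. x l \<le> hi"
  shows "(\<Sum>l\<in>{1..N}. A i l * x l) \<le> hi"
proof -
  have "-hi \<le> (\<Sum>l\<in>{1..N}. A i l * (- x l))"
    by (rule conv_lower[OF rs i]) (use hi in auto)
  then show ?thesis by (simp add: sum_negf)
qed

lemma upd_bounds:
  assumes rs: "row_stochastic N A" and i: "i \<in> {1..N}"
    and b: "\<forall>l\<in>{1..N}. lo \<le> x l \<and> x l \<le> hi"
  shows "lo \<le> upd N A x s i \<and> upd N A x s i \<le> hi"
proof (cases "i \<in> s")
  case True
  then show ?thesis using conv_lower[OF rs i, of lo x] conv_upper[OF rs i, of x hi] b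
    by (simp add: upd_in)
next
  case False
  then show ?thesis using b i by (simp add: upd_other)
qed

lemma conv_lower_p:
  assumes rs: "row_stochastic N A" and j: "j \<in> {1..N}" and p: "p \<in> {1..N}"
    and lo: "\<forall>l\<in>{1..N}. m0 \<le> x l"
  shows "m0 + A j p * (x p - m0) \<le> (\<Sum>l\<in>{1..N}. A j l * x l)"
proof -
  have s1: "(\<Sum>l\<in>{1..N}. A j l) = 1" and nn: "\<forall>l\<in>{1..N}. A j l \<ge> 0"
    using rs j unfolding row_stochastic_def by auto
  have "A j p * (x p - m0) \<le> (\<Sum>l\<in>{1..N}. A j l * (x l - m0))"
    by (rule member_le_sum[where f="\<lambda>l. A j l * (x l - m0)"]) (use p nn lo in auto)
  also have "\<dots> = (\<Sum>l\<in>{1..N}. A j l * x l) - (\<Sum>l\<in>{1..N}. A j l) * m0"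
    by (simp add: right_diff_distrib sum_subtractf sum_distrib_right)
  finally show ?thesis using s1 by simp
qed

lemma conv_upper_p:
  assumes rs: "row_stochastic N A" and j: "j \<in> {1..N}" and p: "p \<in> {1..N}"
    and hi: "\<forall>l\<in>{1..N}. x l \<le> M0"
  shows "(\<Sum>l\<in>{1..N}. A j l * x l) \<le> M0 - A j p * (M0 - x p)"
proof -
  have "-M0 + A j p * (- x p - - M0) \<le> (\<Sum>l\<in>{1..N}. A j l * (- x l))"
    by (rule conv_lower_p[OF rs j p]) (use hi in auto)
  then show ?thesis by (simp add: sum_negf algebra_simps)
qed

lemma spn_upd:
  assumes rs: "row_stochastic N A" and N1: "N \<ge> 1"
  shows "spn N (upd N A x s) \<le> spn N x"
proof -
  let ?V = "{1..N}"
  have ne: "?V \<noteq> {}" using N1 by auto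
  let ?m = "Min (x ` ?V)" and ?M = "Max (x ` ?V)"
  have b: "\<forall>l\<in>?V. ?m \<le> x l \<and> x l \<le> ?M" by auto
  have "\<forall>i\<in>?V. ?m \<le> upd N A x s i \<and> upd N A x s i \<le> ?M"
    using upd_bounds[OF rs _ b] by blast
  then have "?m \<le> Min (upd N A x s ` ?V)" "Max (upd N A x s ` ?V) \<le> ?M"
    using ne by auto
  then show ?thesis unfolding spn_def by linarith
qed

lemma spn_mono:
  assumes rs: "row_stochastic N A" and N1: "N \<ge> 1"
  shows "spn N (XX N A h x1 (n + k)) \<le> spn N (XX N A h x1 n)"
proof (induction k)
  case 0
  then show ?case by simp
next
  case (Suc k)
  then show ?case using spn_upd[OF rs N1, of "XX N A h x1 (n + k)" "h (Suc (n + k))"]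
    by (simp add: XX_Suc)
qed

lemma spn_nonneg:
  assumes N1: "N \<ge> 1" shows "spn N x \<ge> 0"
proof -
  have "1 \<in> {1..N}" using N1 by auto
  then have "Min (x ` {1..N}) \<le> x 1" "x 1 \<le> Max (x ` {1..N})" by auto
  then show ?thesis unfolding spn_def by linarith
qed

lemma disagreement_le:
  assumes N1: "N \<ge> 1"
  shows "disagreement N x \<le> real N * (spn N x)^2"
proof -
  let ?V = "{1..N}"
  let ?m = "Min (x ` ?V)" and ?M = "Max (x ` ?V)"
  let ?mu = "(1 / real N) * (\<Sum>i\<in>?V. x i)"
  have Np: "real N > 0" using N1 by auto
  have b: "\<forall>l\<in>?V. ?m \<le> x l \<and> x l \<le> ?M" by auto
  have "(\<Sum>i\<in>?V. ?m) \<le> (\<Sum>i\<in>?V. x i)" by (rule sum_mono) (use b in auto)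
  then have "real N * ?m \<le> (\<Sum>i\<in>?V. x i)" by simp
  then have mu1: "?m \<le> ?mu" using Np by (simp add: field_simps)
  have "(\<Sum>i\<in>?V. x i) \<le> (\<Sum>i\<in>?V. ?M)" by (rule sum_mono) (use b in auto)
  then have "(\<Sum>i\<in>?V. x i) \<le> real N * ?M" by simp
  then have mu2: "?mu \<le> ?M" using Np by (simp add: field_simps)
  have "\<forall>j\<in>?V. (x j - ?mu)^2 \<le> (spn N x)^2"
  proof
    fix j assume j: "j \<in> ?V"
    have xb: "?m \<le> x j" "x j \<le> ?M" using b j by auto
    have "\<bar>x j - ?mu\<bar> \<le> spn N x" using xb mu1 mu2 unfolding spn_def abs_le_iff by linarith
    then show "(x j - ?mu)^2 \<le> (spn N x)^2"
      by (metis abs_ge_zero power2_abs power_mono)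
  qed
  then have "disagreement N x \<le> (\<Sum>j\<in>?V. (spn N x)^2)"
    unfolding disagreement_def by (intro sum_mono) auto
  then show ?thesis by simp
qed

lemma block_det:
  assumes rs: "row_stochastic N A" and N1: "N \<ge> 1"
    and r: "r \<in> {1..N}" and lsV: "set ls \<subseteq> {1..N}"
    and par: "\<forall>t<length ls. \<exists>p\<in>insert r (set (take t ls)). p \<in> {1..N} \<and> A (ls!t) p \<ge> \<eta>"
    and eta: "0 < \<eta>" "\<eta> \<le> 1"
    and hb: "\<forall>t<length ls. h (Suc (n + t)) = {ls!t}"
  shows "\<forall>t\<le>length ls. (\<forall>l\<in>{1..N}. Min (XX N A h x1 n ` {1..N}) \<le> XX N A h x1 (n+t) l
              \<and> XX N A h x1 (n+t) l \<le> Max (XX N A h x1 n ` {1..N}))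
         \<and> (\<forall>i\<in>insert r (set (take t ls)).
              Min (XX N A h x1 n ` {1..N}) + \<eta>^t * (XX N A h x1 n r - Min (XX N A h x1 n ` {1..N}))
                 \<le> XX N A h x1 (n+t) i
              \<and> XX N A h x1 (n+t) i \<le>
               Max (XX N A h x1 n ` {1..N}) - \<eta>^t * (Max (XX N A h x1 n ` {1..N}) - XX N A h x1 n r))"
proof -
  let ?V = "{1..N}"
  let ?x0 = "XX N A h x1 n"
  let ?m = "Min (?x0 ` ?V)" and ?M = "Max (?x0 ` ?V)" and ?a = "?x0 r"
  let ?y = "\<lambda>t. XX N A h x1 (n+t)"
  have am: "?m \<le> ?a" "?a \<le> ?M" using r by auto
  show ?thesis
  proof (intro allI impI)
    fix t assume "t \<le> length ls"
    then show "(\<forall>l\<in>?V. ?m \<le> ?y t l \<and> ?y t l \<le> ?M)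
      \<and> (\<forall>i\<in>insert r (set (take t ls)). ?m + \<eta>^t * (?a - ?m) \<le> ?y t i \<and> ?y t i \<le> ?M - \<eta>^t * (?M - ?a))"
    proof (induction t)
      case 0
      then show ?case using r by auto
    next
      case (Suc t)
      then have tl: "t < length ls" by simp
      from Suc.IH tl have IH1: "\<forall>l\<in>?V. ?m \<le> ?y t l \<and> ?y t l \<le> ?M"
        and IH2: "\<forall>i\<in>insert r (set (take t ls)). ?m + \<eta>^t * (?a - ?m) \<le> ?y t i \<and> ?y t i \<le> ?M - \<eta>^t * (?M - ?a)"
        by auto
      let ?j = "ls ! t"
      have jV: "?j \<in> ?V" using lsV tl nth_mem by blast
      have ystep: "?y (Suc t) = upd N A (?y t) {?j}"
        using hb tl by (simp add: XX_Suc)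
      have P1: "\<forall>l\<in>?V. ?m \<le> ?y (Suc t) l \<and> ?y (Suc t) l \<le> ?M"
        unfolding ystep using upd_bounds[OF rs _ IH1] by blast
      have etat: "\<eta>^Suc t \<le> \<eta>^t" using eta by (simp add: power_decreasing)
      have e0: "\<eta>^t \<ge> 0" using eta by simp
      have P2: "?m + \<eta>^Suc t * (?a - ?m) \<le> ?y (Suc t) i \<and> ?y (Suc t) i \<le> ?M - \<eta>^Suc t * (?M - ?a)"
        if i: "i \<in> insert r (set (take (Suc t) ls))" for i
      proof (cases "i = ?j")
        case True
        obtain p where p: "p \<in> insert r (set (take t ls))" "p \<in> ?V" "A ?j p \<ge> \<eta>"
          using par tl by blast
        have yp: "?m + \<eta>^t * (?a - ?m) \<le> ?y t p" "?y t p \<le> ?M - \<eta>^t * (?M - ?a)"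
          using IH2 p(1) by auto
        have ui: "?y (Suc t) ?j = (\<Sum>l\<in>?V. A ?j l * ?y t l)"
          unfolding ystep by (rule upd_in) simp
        have lo1: "?m + A ?j p * (?y t p - ?m) \<le> ?y (Suc t) ?j"
          unfolding ui by (rule conv_lower_p[OF rs jV p(2)]) (use IH1 in auto)
        have up1: "?y (Suc t) ?j \<le> ?M - A ?j p * (?M - ?y t p)"
          unfolding ui by (rule conv_upper_p[OF rs jV p(2)]) (use IH1 in auto)
        have d1: "?y t p - ?m \<ge> \<eta>^t * (?a - ?m)" using yp by linarith
        have d1': "\<eta>^t * (?a - ?m) \<ge> 0" using am e0 by simp
        have d2: "?M - ?y t p \<ge> \<eta>^t * (?M - ?a)" using yp by linarith
        have d2': "\<eta>^t * (?M - ?a) \<ge> 0" using am e0 by simp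
        have "A ?j p * (?y t p - ?m) \<ge> \<eta> * (?y t p - ?m)"
          using p(3) d1 d1' by (intro mult_right_mono) auto
        moreover have "\<eta> * (?y t p - ?m) \<ge> \<eta> * (\<eta>^t * (?a - ?m))"
          using d1 eta by (intro mult_left_mono) auto
        moreover have "A ?j p * (?M - ?y t p) \<ge> \<eta> * (?M - ?y t p)"
          using p(3) d2 d2' by (intro mult_right_mono) auto
        moreover have "\<eta> * (?M - ?y t p) \<ge> \<eta> * (\<eta>^t * (?M - ?a))"
          using d2 eta by (intro mult_left_mono) auto
        ultimately show ?thesis using lo1 up1 True by (simp add: mult.assoc)
      next
        case False
        have "take (Suc t) ls = take t ls @ [?j]" using tl by (simp add: take_Suc_conv_app_nth)
        then have i': "i \<in> insert r (set (take t ls))" using i False by auto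
        have iV: "i \<in> ?V" using i' r lsV by (auto dest: in_set_takeD)
        have yi: "?y (Suc t) i = ?y t i" unfolding ystep using False iV by (simp add: upd_other)
        have "\<eta>^Suc t * (?a - ?m) \<le> \<eta>^t * (?a - ?m)"
          using etat am by (intro mult_right_mono) auto
        moreover have "\<eta>^Suc t * (?M - ?a) \<le> \<eta>^t * (?M - ?a)"
          using etat am by (intro mult_right_mono) auto
        ultimately show ?thesis using IH2 i' yi by fastforce
      qed
      show ?case using P1 P2 by blast
    qed
  qed
qed

lemma block_spn:
  assumes rs: "row_stochastic N A" and N1: "N \<ge> 1"
    and r: "r \<in> {1..N}" and lsV: "insert r (set ls) = {1..N}"
    and par: "\<forall>t<length ls. \<exists>p\<in>insert r (set (take t ls)). p \<in> {1..N} \<and> A (ls!t) p \<ge> \<eta>"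
    and eta: "0 < \<eta>" "\<eta> \<le> 1"
    and hb: "\<forall>t<length ls. h (Suc (n + t)) = {ls!t}"
  shows "spn N (XX N A h x1 (n + length ls)) \<le> (1 - \<eta>^length ls) * spn N (XX N A h x1 n)"
proof -
  let ?V = "{1..N}"
  let ?x0 = "XX N A h x1 n"
  let ?m = "Min (?x0 ` ?V)" and ?M = "Max (?x0 ` ?V)" and ?a = "?x0 r"
  let ?L = "length ls"
  let ?y = "XX N A h x1 (n + ?L)"
  have ne: "?V \<noteq> {}" using N1 by auto
  have B: "\<forall>i\<in>insert r (set (take ?L ls)). ?m + \<eta>^?L * (?a - ?m) \<le> ?y i \<and> ?y i \<le> ?M - \<eta>^?L * (?M - ?a)"
  proof -
    have sub: "set ls \<subseteq> ?V" using lsV by auto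
    show ?thesis
      using conjunct2[OF block_det[OF rs N1 r sub par eta hb, of x1, rule_format, OF order_refl]] .
  qed
  then have B': "\<forall>i\<in>?V. ?m + \<eta>^?L * (?a - ?m) \<le> ?y i \<and> ?y i \<le> ?M - \<eta>^?L * (?M - ?a)"
    using lsV by simp
  then have "?m + \<eta>^?L * (?a - ?m) \<le> Min (?y ` ?V)" "Max (?y ` ?V) \<le> ?M - \<eta>^?L * (?M - ?a)"
    using ne by auto
  then show ?thesis unfolding spn_def by (simp add: algebra_simps)
qed

lemma leave_set:
  assumes "(r, i) \<in> E\<^sup>*" "r \<in> S"
  shows "i \<in> S \<or> (\<exists>u v. (u, v) \<in> E \<and> u \<in> S \<and> v \<notin> S)"
  using assms(1)
proof (induction rule: rtrancl_induct)
  case base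
  then show ?case using assms(2) by simp
next
  case (step y z)
  then show ?case by blast
qed

lemma order_exists:
  assumes r: "r \<in> {1..N}" and root: "\<forall>i\<in>{1..N}. (r, i) \<in> (graph_edges N A)\<^sup>*"
  shows "S \<subseteq> {1..N} \<Longrightarrow> r \<in> S \<Longrightarrow> \<exists>ls. set ls = {1..N} - S \<and>
    (\<forall>t<length ls. \<exists>p\<in>S \<union> set (take t ls). p \<in> {1..N} \<and> A (ls!t) p > 0)"
proof (induction "card ({1..N} - S)" arbitrary: S rule: less_induct)
  case less
  show ?case
  proof (cases "{1..N} - S = {}")
    case True
    then show ?thesis by (intro exI[of _ "[]"]) auto
  next
    case False
    then obtain i where i0: "i \<in> {1..N} - S" by (meson ex_in_conv)
    then have i: "i \<in> {1..N}" "i \<notin> S" by auto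
    then obtain u v where uv: "(u, v) \<in> graph_edges N A" "u \<in> S" "v \<notin> S"
      using leave_set[OF root[rule_format, OF i(1)] less.prems(2)] by blast
    have uvV: "u \<in> {1..N}" "v \<in> {1..N}" "A v u > 0" using uv(1) by (simp_all add: graph_edges_def)
    have "{1..N} - insert v S \<subset> {1..N} - S" using uvV(2) uv(3) by blast
    then have lt: "card ({1..N} - insert v S) < card ({1..N} - S)"
      by (intro psubset_card_mono) simp_all
    have s1: "insert v S \<subseteq> {1..N}" using less.prems(1) uvV(2) by simp
    have s2: "r \<in> insert v S" using less.prems(2) by simp
    obtain ls' where ls': "set ls' = {1..N} - insert v S"
      "\<forall>t<length ls'. \<exists>p\<in>insert v S \<union> set (take t ls'). p \<in> {1..N} \<and> A (ls'!t) p > 0"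
      using less.hyps[OF lt s1 s2] by blast
    show ?thesis
    proof (intro exI[of _ "v # ls'"] conjI allI impI)
      have "set (v # ls') = insert v ({1..N} - insert v S)" using ls'(1) by simp
      also have "\<dots> = {1..N} - S" using uvV(2) uv(3) by blast
      finally show "set (v # ls') = {1..N} - S" .
    next
      fix t assume t: "t < length (v # ls')"
      show "\<exists>p\<in>S \<union> set (take t (v # ls')). p \<in> {1..N} \<and> A ((v # ls')!t) p > 0"
      proof (cases t)
        case 0
        then show ?thesis using uv(2) uvV by auto
      next
        case (Suc t')
        then have "t' < length ls'" using t by simp
        then obtain p where "p \<in> insert v S \<union> set (take t' ls')" "p \<in> {1..N}" "A (ls'!t') p > 0"
          using ls'(2) by blast
        then show ?thesis using Suc by auto
      qed
    qed
  qed
qed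




lemma seq_to_0:
  fixes a e :: "nat \<Rightarrow> real"
  assumes a0: "\<And>b. 0 \<le> a b" and aK: "\<And>b. a b \<le> K"
    and rec: "\<And>b. a (Suc b) \<le> q * a b + e b"
    and q: "0 \<le> q" "q < 1" and e: "e \<longlonglongrightarrow> 0"
  shows "a \<longlonglongrightarrow> 0"
proof (rule LIMSEQ_I)
  fix r :: real assume r: "0 < r"
  let ?d = "r / 2"
  have K0: "0 \<le> K" using a0[of 0] aK[of 0] by linarith
  have "?d * (1 - q) > 0" using r q by simp
  from LIMSEQ_D[OF e this] obtain B where B: "\<forall>b\<ge>B. norm (e b - 0) < ?d * (1 - q)" by blast
  have ind: "a (B + k) \<le> q^k * K + ?d" for k
  proof (induction k)
    case 0
    then show ?case using aK[of B] r by simp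
  next
    case (Suc k)
    have "\<bar>e (B + k)\<bar> < ?d * (1 - q)" using B[rule_format, of "B + k"] by simp
    then have "e (B + k) \<le> ?d * (1 - q)" by linarith
    then have "a (B + Suc k) \<le> q * a (B + k) + ?d * (1 - q)" using rec[of "B + k"] by simp
    also have "\<dots> \<le> q * (q^k * K + ?d) + ?d * (1 - q)"
      using Suc q by (intro add_right_mono mult_left_mono) auto
    also have "\<dots> = q^Suc k * K + ?d" by (simp add: field_simps)
    finally show ?case .
  qed
  have "(\<lambda>k. q^k * K) \<longlonglongrightarrow> 0 * K"
    by (intro tendsto_mult tendsto_const LIMSEQ_realpow_zero q)
  then have lq: "(\<lambda>k. q^k * K) \<longlonglongrightarrow> 0" by simp
  have d0: "?d > 0" using r by simp
  from LIMSEQ_D[OF lq d0] obtain k0 where k0: "\<forall>k\<ge>k0. norm (q^k * K - 0) < ?d" by blast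
  show "\<exists>no. \<forall>n\<ge>no. norm (a n - 0) < r"
  proof (intro exI allI impI)
    fix n assume n: "B + k0 \<le> n"
    define k where "k = n - B"
    have k: "n = B + k" "k \<ge> k0" using n unfolding k_def by linarith+
    have "q^k * K < ?d" using k0 k(2) by force
    then have "a n < r" using ind[of k] k(1) by simp
    then show "norm (a n - 0) < r" using a0[of n] by simp
  qed
qed

theorem corollary4:
  fixes M :: "'a measure" and N :: nat and A :: "nat \<Rightarrow> nat \<Rightarrow> real"
    and \<sigma> :: "nat \<Rightarrow> 'a \<Rightarrow> nat set" and x1 :: "nat \<Rightarrow> real" and \<alpha> :: real
  assumes "prob_space M"
    and "N \<ge> 1"
    and "row_stochastic N A"
    and meas: "\<And>k. k \<ge> 1 \<Longrightarrow> \<sigma> k \<in> M \<rightarrow>\<^sub>M count_space UNIV"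
    and vals: "\<And>k \<omega>. k \<ge> 1 \<Longrightarrow> \<omega> \<in> space M \<Longrightarrow> \<sigma> k \<omega> \<subseteq> {1..N}"
    and a: "rooted_graph N A"
    and "0 < \<alpha>" and "\<alpha> < 1"
    and b: "\<And>k s. k \<ge> 1 \<Longrightarrow> hist_prob M \<sigma> (k - 1) s > 0 \<Longrightarrow>
             cond_prob M \<sigma> k s \<noteq> 0 \<Longrightarrow> cond_prob M \<sigma> k s \<ge> \<alpha>"
    and c: "\<And>k s j. k \<ge> 1 \<Longrightarrow> hist_prob M \<sigma> (k - 1) s > 0 \<Longrightarrow> j \<in> {1..N} \<Longrightarrow>
             cond_prob M \<sigma> k (s(k := {j})) \<noteq> 0"
  shows "\<forall>\<epsilon>>0. (\<lambda>k. measure M {\<omega> \<in> space M.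
            disagreement N (cons_iter N A \<sigma> x1 \<omega> (k - 1)) \<ge> \<epsilon>}) \<longlonglongrightarrow> 0"
proof (cases "N = 1")
  case True
  have "disagreement N x = 0" for x unfolding disagreement_def True by simp
  then show ?thesis by simp
next
  case False
  then have N2: "N \<ge> 2" using assms(2) by simp
  note P = assms(1)
  note rs = assms(3) and N1 = assms(2)
  interpret prob_space M by (rule P)
  have EvS: "Ev M \<sigma> Q \<in> sets M" if "dep n Q" for n Q
    by (rule Ev_sets[OF P assms(7)], (rule meas vals b c that; assumption)+)
  have blk: "\<alpha> ^ length js * measure M (Ev M \<sigma> Q)
      \<le> measure M (Ev M \<sigma> (\<lambda>h. Q h \<and> (\<forall>t<length js. h (Suc (n + t)) = {js ! t})))"
    if "dep n Q" "set js \<subseteq> {1..N}" for n Q js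
    by (rule block[OF P assms(7)], (rule meas vals b c that; assumption)+)
  let ?V = "{1..N}"
  obtain r where r: "r \<in> ?V" and root: "\<forall>i\<in>?V. (r, i) \<in> (graph_edges N A)\<^sup>*"
    using a unfolding rooted_graph_def by blast
  obtain ls where ls: "set ls = ?V - {r}"
    and par0: "\<forall>t<length ls. \<exists>p\<in>{r} \<union> set (take t ls). p \<in> ?V \<and> A (ls!t) p > 0"
    using order_exists[OF r root, of "{r}"] r by auto
  define L where "L = length ls"
  have L1: "L \<ge> 1"
  proof -
    have "1 \<in> ?V" "2 \<in> ?V" using N2 by auto
    then have "(if r = 1 then 2 else 1) \<in> ?V - {r}" by auto
    then have "?V - {r} \<noteq> {}" by blast
    then show ?thesis using ls unfolding L_def by (cases ls) auto
  qed
  define PS where "PS = {A i j | i j. i \<in> ?V \<and> j \<in> ?V \<and> A i j > 0}"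
  define \<eta> where "\<eta> = Min (insert 1 PS)"
  have finPS: "finite PS"
  proof -
    have "PS \<subseteq> (\<lambda>(i, j). A i j) ` (?V \<times> ?V)" unfolding PS_def by auto
    then show ?thesis by (rule finite_subset) simp
  qed
  have eta_pos: "\<eta> > 0" unfolding \<eta>_def using finPS by (auto simp: PS_def)
  have eta_le1: "\<eta> \<le> 1" unfolding \<eta>_def using finPS by simp
  have eta_le: "\<eta> \<le> A i j" if "i \<in> ?V" "j \<in> ?V" "A i j > 0" for i j
  proof -
    have "A i j \<in> insert 1 PS" using that unfolding PS_def by blast
    then show ?thesis unfolding \<eta>_def using finPS by (intro Min_le) auto
  qed
  have par: "\<forall>t<length ls. \<exists>p\<in>insert r (set (take t ls)). p \<in> ?V \<and> A (ls!t) p \<ge> \<eta>"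
  proof (intro allI impI)
    fix t assume t: "t < length ls"
    then obtain p where p: "p \<in> {r} \<union> set (take t ls)" "p \<in> ?V" "A (ls!t) p > 0"
      using par0 by blast
    have "ls ! t \<in> ?V" using t ls nth_mem by blast
    then show "\<exists>p\<in>insert r (set (take t ls)). p \<in> ?V \<and> A (ls!t) p \<ge> \<eta>"
      using p eta_le by auto
  qed
  have lsV: "insert r (set ls) = ?V" using ls insert_Diff[OF r] by simp
  define \<beta> where "\<beta> = \<eta> ^ L"
  define cc where "cc = 1 - \<beta>"
  have beta: "0 < \<beta>" "\<beta> \<le> 1" unfolding \<beta>_def using eta_pos eta_le1 by (auto intro: power_le_one)
  then have cc: "0 \<le> cc" "cc < 1" unfolding cc_def by auto
  define p where "p = \<alpha> ^ L"
  have p: "0 < p" "p \<le> 1" unfolding p_def using assms(7,8) by (auto intro: power_le_one)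
  define D where "D = spn N x1"
  define W where "W = (\<lambda>n \<omega>. spn N (cons_iter N A \<sigma> x1 \<omega> n))"
  have Wmono: "W (n + k) \<omega> \<le> W n \<omega>" for n k \<omega>
    unfolding W_def cons_XX by (rule spn_mono[OF rs N1])
  have W0: "W 0 \<omega> = D" for \<omega> unfolding W_def D_def by simp
  have Wnn: "W n \<omega> \<ge> 0" for n \<omega> unfolding W_def by (rule spn_nonneg[OF N1])
  have Wblock: "W (n + L) \<omega> \<le> cc * W n \<omega>"
    if "\<forall>t<L. \<sigma> (Suc (n + t)) \<omega> = {ls!t}" for n \<omega>
    unfolding W_def cons_XX cc_def \<beta>_def L_def
    by (rule block_spn[OF rs N1 r lsV par eta_pos eta_le1]) (use that L_def in simp)
  define Q where "Q = (\<lambda>n m h. spn N (XX N A h x1 n) > cc^m * D)"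
  have depQ: "dep n (Q n m)" for n m
    unfolding dep_def
  proof (intro allI impI)
    fix h h' :: "nat \<Rightarrow> nat set" assume "\<forall>i\<in>{1..n}. h i = h' i"
    then have "XX N A h x1 n = XX N A h' x1 n" by (rule XX_dep)
    then show "Q n m h = Q n m h'" unfolding Q_def by simp
  qed
  define SC where "SC = (\<lambda>n h. \<forall>t<L. h (Suc (n + t)) = {ls!t})"
  have depQS: "dep (n + L) (\<lambda>h. Q n m h \<and> SC n h)" for n m
    unfolding dep_def Q_def SC_def
  proof (intro allI impI)
    fix h h' :: "nat \<Rightarrow> nat set" assume ag: "\<forall>i\<in>{1..n + L}. h i = h' i"
    then have "XX N A h x1 n = XX N A h' x1 n" by (intro XX_dep) auto
    moreover have "h (Suc (n + t)) = h' (Suc (n + t))" if "t < L" for t using ag that by auto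
    ultimately show "(cc ^ m * D < spn N (XX N A h x1 n) \<and> (\<forall>t<L. h (Suc (n + t)) = {ls ! t})) =
           (cc ^ m * D < spn N (XX N A h' x1 n) \<and> (\<forall>t<L. h' (Suc (n + t)) = {ls ! t}))" by auto
  qed
  define Bv where "Bv = (\<lambda>b m. {\<omega>\<in>space M. W (b * L) \<omega> > cc^m * D})"
  have BvEv: "Bv b m = Ev M \<sigma> (Q (b * L) m)" for b m
    unfolding Bv_def Ev_def Q_def W_def cons_XX by simp
  have Bv_sets: "Bv b m \<in> sets M" for b m
    unfolding BvEv by (rule EvS[OF depQ])
  define aa where "aa = (\<lambda>b m. measure M (Bv b m))"
  have aa0: "aa b 0 = 0" for b
  proof -
    have "\<not> (cc^0 * D < W (b * L) \<omega>)" for \<omega> using Wmono[of 0 "b * L" \<omega>] W0[of \<omega>] by simp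
    then have "Bv b 0 = {}" unfolding Bv_def by blast
    then show ?thesis unfolding aa_def by simp
  qed
  have aarec: "aa (Suc b) (Suc m) \<le> (1 - p) * aa b (Suc m) + aa b m" for b m
  proof -
    let ?n = "b * L"
    let ?E1 = "Ev M \<sigma> (Q ?n (Suc m))"
    let ?E1S = "Ev M \<sigma> (\<lambda>h. Q ?n (Suc m) h \<and> SC ?n h)"
    have E1: "?E1 \<in> sets M" by (rule EvS[OF depQ])
    have E1S: "?E1S \<in> sets M" by (rule EvS[OF depQS])
    have sub1: "?E1S \<subseteq> ?E1" unfolding Ev_def by auto
    have incl: "Bv (Suc b) (Suc m) \<subseteq> (?E1 - ?E1S) \<union> Bv b m"
    proof
      fix \<omega> assume w: "\<omega> \<in> Bv (Suc b) (Suc m)"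
      then have ws: "\<omega> \<in> space M" and gt: "W (?n + L) \<omega> > cc^Suc m * D"
        unfolding Bv_def by (auto simp: add.commute)
      have "W (?n + L) \<omega> \<le> W ?n \<omega>" by (rule Wmono)
      then have q1: "\<omega> \<in> ?E1" using ws gt unfolding Ev_def Q_def W_def cons_XX by simp
      show "\<omega> \<in> (?E1 - ?E1S) \<union> Bv b m"
      proof (cases "SC ?n (\<lambda>i. \<sigma> i \<omega>)")
        case True
        then have "W (?n + L) \<omega> \<le> cc * W ?n \<omega>" using Wblock unfolding SC_def by blast
        then have "cc * (cc^m * D) < cc * W ?n \<omega>" using gt by simp
        then have "cc^m * D < W ?n \<omega>" using cc(1)
          by (meson mult_left_mono not_less)
        then show ?thesis using ws unfolding Bv_def by simp
      next
        case False
        then show ?thesis using q1 unfolding Ev_def by simp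
      qed
    qed
    have "aa (Suc b) (Suc m) \<le> measure M ((?E1 - ?E1S) \<union> Bv b m)"
      unfolding aa_def by (rule finite_measure_mono[OF incl]) (use E1 E1S Bv_sets in auto)
    also have "\<dots> \<le> measure M (?E1 - ?E1S) + measure M (Bv b m)"
      by (rule measure_Un_le) (use E1 E1S Bv_sets in auto)
    also have "measure M (?E1 - ?E1S) = measure M ?E1 - measure M ?E1S"
      by (rule finite_measure_Diff[OF E1 E1S sub1])
    also have "measure M ?E1S \<ge> p * measure M ?E1"
    proof -
      have "measure M (Ev M \<sigma> (\<lambda>h. Q ?n (Suc m) h \<and> (\<forall>t<length ls. h (Suc (?n + t)) = {ls!t})))
          \<ge> \<alpha> ^ length ls * measure M ?E1"
        by (rule blk[OF depQ]) (use ls in auto)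
      then show ?thesis unfolding SC_def p_def L_def by simp
    qed
    then have "measure M ?E1 - measure M ?E1S \<le> (1 - p) * measure M ?E1"
      by (simp add: algebra_simps)
    finally show ?thesis unfolding aa_def BvEv by simp
  qed
  have aalim: "(\<lambda>b. aa b m) \<longlonglongrightarrow> 0" for m
  proof (induction m)
    case 0
    then show ?case by (simp add: aa0)
  next
    case (Suc m)
    show ?case
    proof (rule seq_to_0[where K = 1 and q = "1 - p" and e = "\<lambda>b. aa b m"])
      show "0 \<le> aa b (Suc m)" for b unfolding aa_def by simp
      show "aa b (Suc m) \<le> 1" for b unfolding aa_def by simp
      show "aa (Suc b) (Suc m) \<le> (1 - p) * aa b (Suc m) + aa b m" for b by (rule aarec)
      show "0 \<le> 1 - p" "1 - p < 1" using p by auto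
      show "(\<lambda>b. aa b m) \<longlonglongrightarrow> 0" by (rule Suc.IH)
    qed
  qed
  show ?thesis
  proof (intro allI impI)
    fix \<epsilon> :: real assume eps: "\<epsilon> > 0"
    have "(\<lambda>m. real N * (cc^m * D)^2) \<longlonglongrightarrow> real N * (0 * D)^2"
      by (intro tendsto_intros LIMSEQ_realpow_zero cc)
    then have "(\<lambda>m. real N * (cc^m * D)^2) \<longlonglongrightarrow> 0" by simp
    from LIMSEQ_D[OF this eps] obtain m where m: "real N * (cc^m * D)^2 < \<epsilon>"
      by (metis abs_of_nonneg diff_zero le_refl real_norm_def zero_le_power2
          mult_nonneg_nonneg of_nat_0_le_iff)
    show "(\<lambda>k. measure M {\<omega> \<in> space M. disagreement N (cons_iter N A \<sigma> x1 \<omega> (k - 1)) \<ge> \<epsilon>}) \<longlonglongrightarrow> 0"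
    proof (rule LIMSEQ_I)
      fix r :: real assume r: "r > 0"
      from LIMSEQ_D[OF aalim[of m] r] obtain B where B: "\<forall>b\<ge>B. norm (aa b m - 0) < r" by blast
      show "\<exists>no. \<forall>k\<ge>no. norm (measure M {\<omega> \<in> space M. disagreement N (cons_iter N A \<sigma> x1 \<omega> (k - 1)) \<ge> \<epsilon>} - 0) < r"
      proof (intro exI allI impI)
        fix k assume k: "Suc (B * L) \<le> k"
        define bb where "bb = (k - 1) div L"
        have "B * L div L \<le> (k - 1) div L" using k by (intro div_le_mono) simp
        then have bbB: "bb \<ge> B" unfolding bb_def using L1 by simp
        have bbk: "bb * L \<le> k - 1" unfolding bb_def by simp
        have incl: "{\<omega> \<in> space M. disagreement N (cons_iter N A \<sigma> x1 \<omega> (k - 1)) \<ge> \<epsilon>} \<subseteq> Bv bb m"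
        proof
          fix \<omega> assume w: "\<omega> \<in> {\<omega> \<in> space M. disagreement N (cons_iter N A \<sigma> x1 \<omega> (k - 1)) \<ge> \<epsilon>}"
          have d1: "disagreement N (cons_iter N A \<sigma> x1 \<omega> (k - 1)) \<le> real N * (W (k - 1) \<omega>)^2"
            unfolding W_def by (rule disagreement_le[OF N1])
          have d2: "\<epsilon> \<le> disagreement N (cons_iter N A \<sigma> x1 \<omega> (k - 1))" using w by simp
          have "\<epsilon> \<le> real N * (W (k - 1) \<omega>)^2" using d1 d2 by linarith
          then have "real N * (cc^m * D)^2 < real N * (W (k - 1) \<omega>)^2" using m by linarith
          then have "(cc^m * D)^2 < (W (k - 1) \<omega>)^2" by (simp add: mult_less_cancel_left)
          then have "cc^m * D < W (k - 1) \<omega>" using Wnn by (rule power_less_imp_less_base)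
          moreover have "W (k - 1) \<omega> \<le> W (bb * L) \<omega>"
          proof -
            have "bb * L + (k - 1 - bb * L) = k - 1" using bbk by simp
            then show ?thesis using Wmono[of "bb * L" "k - 1 - bb * L" \<omega>] by simp
          qed
          ultimately show "\<omega> \<in> Bv bb m" using w unfolding Bv_def by simp
        qed
        have "measure M {\<omega> \<in> space M. disagreement N (cons_iter N A \<sigma> x1 \<omega> (k - 1)) \<ge> \<epsilon>} \<le> aa bb m"
          unfolding aa_def by (rule finite_measure_mono[OF incl Bv_sets])
        moreover have "aa bb m < r" using B bbB by force
        ultimately show "norm (measure M {\<omega> \<in> space M. disagreement N (cons_iter N A \<sigma> x1 \<omega> (k - 1)) \<ge> \<epsilon>} - 0) < r"
          by simp
      qed
    qed
  qed
qed


end
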